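(* Let $(G,\sigma)$ be a connection graph with $\sigma$ absolutely inconsistent (i.e. $\mathcal{L}^\sigma$ invertible). Then for any distinct $i,j\in V$, $$\mathcal{R}^\sigma(i,j)=\begin{bmatrix}(\mathcal{C}^\sigma_{ii})^{-1}&0_{d\times d}\\0_{d\times d}&(\mathcal{C}^\sigma_{jj})^{-1}\end{bmatrix}.$$
   Context: A connection graph $(G,\sigma)$: finite connected weighted graph $G=(V,E,W)$, $V=\{1,\dots,n\}$, $w_{xy}>0$ iff $\{x,y\}\in E$, $\deg(x)=\sum_y w_{xy}$, and $\sigma$ mapping oriented edges to $\mathsf{O}(d)$ with $\sigma_{yx}=\sigma_{xy}^{\mathrm T}$. Connection Laplacian $\mathcal{L}=\mathcal{L}^\sigma$: $nd\times nd$ block matrix with blocks $\deg(x)I_d$ on the diagonal, $-w_{xy}\sigma_{xy}$ for $x\sim y$, $0$ otherwise; $\dagger$ = Moore–Penrose pseudoinverse. For $M=\begin{bmatrix}A&B\\C&D\end{bmatrix}$, $M/D=A-BD^\dagger C$. Conductance matrix $\mathcal{C}^\sigma(i,j)=\mathcal{L}/\mathcal{L}_{\{i,j\}^c,\{i,j\}^c}=\begin{bmatrix}\mathcal{C}^\sigma_{ii}&\mathcal{C}^\sigma_{ij}\\ \mathcal{C}^\sigma_{ji}&\mathcal{C}^\sigma_{jj}\end{bmatrix}$ (blocks ordered $i$ then $j$; the diagonal blocks are invertible). $\Omega^0_{ij}=\mathbb{E}[\prod_{\ell=1}^{T^0_j}\sigma_{X_{\ell-1}X_\ell}\mid X_0=i]$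 for the simple random walk $(X_t)$ with transition probabilities $w_{xy}/\deg(x)$ and $T^0_j=\inf\{t\ge0:X_t=j\}$. $\mathcal{W}_{i\to j}=\mathcal{L}^\dagger N_{ij}$, where $N_{ij}$ is the $nd\times d$ block column with $I_d$ at node $i$, $-(\Omega^0_{ij})^{\mathrm T}$ at node $j$, $0$ elsewhere; $\mathcal{W}_{i\to j}(x)$ is its block at $x$. $\mathcal{R}^\sigma(i,j)=\begin{bmatrix}\mathcal{W}_{i\to j}(i)&\mathcal{W}_{j\to i}(i)\\ \mathcal{W}_{i\to j}(j)&\mathcal{W}_{j\to i}(j)\end{bmatrix}$. *)

theory Defs
  imports "HOL-Analysis.Analysis"
begin

text \<open>Large matrices (of size nd x nd) are represented as real functions of two
indices of type 'v \<times> 'd (vertex, coordinate); operations are taken over an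
explicit (finite) index set I.  Blocks of size d x d are HOL-Analysis matrices
real^'d^'d.\<close>

type_synonym ('i) fmat = "'i \<Rightarrow> 'i \<Rightarrow> real"

definition fmmul :: "'i set \<Rightarrow> 'i fmat \<Rightarrow> 'i fmat \<Rightarrow> 'i fmat" where
  "fmmul I A B = (\<lambda>x y. \<Sum>k\<in>I. A x k * B k y)"

definition fmid :: "'i fmat" where
  "fmid = (\<lambda>x y. if x = y then 1 else 0)"

definition is_pinv_on :: "'i set \<Rightarrow> 'i fmat \<Rightarrow> 'i fmat \<Rightarrow> bool" where
  "is_pinv_on I A X \<longleftrightarrow>
     (\<forall>x\<in>I. \<forall>y\<in>I. fmmul I (fmmul I A X) A x y = A x y) \<and>
     (\<forall>x\<in>I. \<forall>y\<in>I. fmmul I (fmmul I X A) X x y = X x y) \<and>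
     (\<forall>x\<in>I. \<forall>y\<in>I. fmmul I A X x y = fmmul I A X y x) \<and>
     (\<forall>x\<in>I. \<forall>y\<in>I. fmmul I X A x y = fmmul I X A y x)"

definition pinv_on :: "'i set \<Rightarrow> 'i fmat \<Rightarrow> 'i fmat" where
  "pinv_on I A = (THE X. is_pinv_on I A X \<and> (\<forall>x y. x \<notin> I \<or> y \<notin> I \<longrightarrow> X x y = 0))"

text \<open>Schur complement M/M[T,T] = M[S,S] - M[S,T] M[T,T]^\<dagger> M[T,S]
 (meaningful for entries indexed by S, where S is the complement of T).\<close>
definition schur_on :: "'i set \<Rightarrow> 'i fmat \<Rightarrow> 'i fmat" where
  "schur_on T M = (\<lambda>x y. M x y - (\<Sum>k\<in>T. \<Sum>l\<in>T. M x k * pinv_on T M k l * M l y))"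

definition deg :: "('v::finite \<Rightarrow> 'v \<Rightarrow> real) \<Rightarrow> 'v \<Rightarrow> real" where
  "deg w x = (\<Sum>y\<in>UNIV. w x y)"

definition connection_graph ::
  "('v::finite \<Rightarrow> 'v \<Rightarrow> real) \<Rightarrow> ('v \<Rightarrow> 'v \<Rightarrow> real^'d::finite^'d) \<Rightarrow> bool" where
  "connection_graph w \<sigma> \<longleftrightarrow>
     (\<forall>x y. w x y \<ge> 0) \<and> (\<forall>x y. w x y = w y x) \<and> (\<forall>x. w x x = 0) \<and>
     (\<forall>x y. (x, y) \<in> {(a, b). w a b > 0}\<^sup>*) \<and>
     (\<forall>x y. w x y > 0 \<longrightarrow> orthogonal_matrix (\<sigma> x y)) \<and>
     (\<forall>x y. w x y > 0 \<longrightarrow> \<sigma> y x = transpose (\<sigma> x y))"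

definition conn_lap ::
  "('v::finite \<Rightarrow> 'v \<Rightarrow> real) \<Rightarrow> ('v \<Rightarrow> 'v \<Rightarrow> real^'d::finite^'d) \<Rightarrow> ('v \<times> 'd) fmat" where
  "conn_lap w \<sigma> = (\<lambda>(x, a) (y, b).
     if x = y then (if a = b then deg w x else 0)
     else - w x y * (\<sigma> x y $ a $ b))"

fun walk_weight ::
  "('v::finite \<Rightarrow> 'v \<Rightarrow> real) \<Rightarrow> ('v \<Rightarrow> 'v \<Rightarrow> real^'d::finite^'d) \<Rightarrow> 'v \<Rightarrow> 'v list \<Rightarrow> real^'d^'d" where
  "walk_weight w \<sigma> x [] = mat 1"
| "walk_weight w \<sigma> x (y # ys) = (w x y / deg w x) *\<^sub>R (\<sigma> x y ** walk_weight w \<sigma> y ys)"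

text \<open>Trajectories X_1..X_T of the walk started at X_0 = i with first hitting time of j equal to T.\<close>
definition hit_paths :: "'v \<Rightarrow> 'v \<Rightarrow> nat \<Rightarrow> 'v list set" where
  "hit_paths i j T = {xs. length xs = T \<and> (i # xs) ! T = j \<and> (\<forall>t<T. (i # xs) ! t \<noteq> j)}"

text \<open>Omega^0_{ij} = E[ prod_{l=1}^{T^0_j} sigma_{X_{l-1} X_l} | X_0 = i ], the expectation
 written out as the sum over all finite trajectories up to the hitting time.\<close>
definition Omega0 ::
  "('v::finite \<Rightarrow> 'v \<Rightarrow> real) \<Rightarrow> ('v \<Rightarrow> 'v \<Rightarrow> real^'d::finite^'d) \<Rightarrow> 'v \<Rightarrow> 'v \<Rightarrow> real^'d^'d" where
  "Omega0 w \<sigma> i j = (\<Sum>T. \<Sum>xs\<in>hit_paths i j T. walk_weight w \<sigma> i xs)"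

definition Ncol ::
  "('v::finite \<Rightarrow> 'v \<Rightarrow> real) \<Rightarrow> ('v \<Rightarrow> 'v \<Rightarrow> real^'d::finite^'d) \<Rightarrow> 'v \<Rightarrow> 'v \<Rightarrow> 'v \<Rightarrow> real^'d^'d" where
  "Ncol w \<sigma> i j x = (if x = i then mat 1 else if x = j then - transpose (Omega0 w \<sigma> i j) else 0)"

definition Wblk ::
  "('v::finite \<Rightarrow> 'v \<Rightarrow> real) \<Rightarrow> ('v \<Rightarrow> 'v \<Rightarrow> real^'d::finite^'d) \<Rightarrow> 'v \<Rightarrow> 'v \<Rightarrow> 'v \<Rightarrow> real^'d^'d" where
  "Wblk w \<sigma> i j x = (\<chi> a b. \<Sum>k\<in>UNIV.
      pinv_on UNIV (conn_lap w \<sigma>) (x, a) k * (Ncol w \<sigma> i j (fst k) $ snd k $ b))"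

text \<open>R^sigma(i,j) as a 2x2 block matrix ((top-left, top-right), (bottom-left, bottom-right)).\<close>
definition Rmat ::
  "('v::finite \<Rightarrow> 'v \<Rightarrow> real) \<Rightarrow> ('v \<Rightarrow> 'v \<Rightarrow> real^'d::finite^'d) \<Rightarrow> 'v \<Rightarrow> 'v \<Rightarrow>
     ((real^'d^'d) \<times> (real^'d^'d)) \<times> ((real^'d^'d) \<times> (real^'d^'d))" where
  "Rmat w \<sigma> i j = ((Wblk w \<sigma> i j i, Wblk w \<sigma> j i i), (Wblk w \<sigma> i j j, Wblk w \<sigma> j i j))"

text \<open>Conductance matrix C^sigma(i,j) = L / L_{{i,j}^c,{i,j}^c}; its block at (x,y) for x,y in {i,j}.\<close>
definition cond_blk ::
  "('v::finite \<Rightarrow> 'v \<Rightarrow> real) \<Rightarrow> ('v \<Rightarrow> 'v \<Rightarrow> real^'d::finite^'d) \<Rightarrow> 'v \<Rightarrow> 'v \<Rightarrow> 'v \<Rightarrow> 'v \<Rightarrow> real^'d^'d" where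
  "cond_blk w \<sigma> i j x y = (\<chi> a b. schur_on ((- {i, j}) \<times> UNIV) (conn_lap w \<sigma>) (x, a) (y, b))"

end

theory Submission imports Defs begin

definition eqon :: "'i set \<Rightarrow> 'i fmat \<Rightarrow> 'i fmat \<Rightarrow> bool" where
  "eqon I A B \<longleftrightarrow> (\<forall>x\<in>I. \<forall>y\<in>I. A x y = B x y)"

lemma fmmul_assoc: "finite I \<Longrightarrow> fmmul I (fmmul I A B) C = fmmul I A (fmmul I B C)"
  unfolding fmmul_def
  by (auto simp: sum_distrib_left sum_distrib_right mult.assoc intro!: ext sum.swap[THEN trans])

lemma eqon_mul: "eqon I A A' \<Longrightarrow> eqon I B B' \<Longrightarrow> eqon I (fmmul I A B) (fmmul I A' B')"
  unfolding eqon_def fmmul_def by (auto intro!: sum.cong)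

lemma eqon_refl: "eqon I A A" by (simp add: eqon_def)
lemma eqon_sym: "eqon I A B \<Longrightarrow> eqon I B A" by (simp add: eqon_def)
lemma eqon_trans [trans]: "eqon I A B \<Longrightarrow> eqon I B C \<Longrightarrow> eqon I A C" by (simp add: eqon_def)

lemma eqon_id_left: "finite I \<Longrightarrow> eqon I (fmmul I fmid B) B"
  unfolding eqon_def fmmul_def fmid_def by (auto simp: if_distrib[of "\<lambda>t. t * _"] sum.delta cong: if_cong)
lemma eqon_id_right: "finite I \<Longrightarrow> eqon I (fmmul I B fmid) B"
  unfolding eqon_def fmmul_def fmid_def by (auto simp: if_distrib[of "\<lambda>t. _ * t"] sum.delta' cong: if_cong)

lemma pinv_on_eq:
  assumes fin: "finite I"
    and AX: "eqon I (fmmul I A X) fmid" and XA: "eqon I (fmmul I X A) fmid"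
    and out: "\<forall>x y. x \<notin> I \<or> y \<notin> I \<longrightarrow> X x y = 0"
  shows "pinv_on I A = X"
  unfolding pinv_on_def
proof (rule the_equality)
  have 1: "eqon I (fmmul I (fmmul I A X) A) A"
    using eqon_trans[OF eqon_mul[OF AX eqon_refl] eqon_id_left[OF fin]] .
  have 2: "eqon I (fmmul I (fmmul I X A) X) X"
    using eqon_trans[OF eqon_mul[OF XA eqon_refl] eqon_id_left[OF fin]] .
  show "is_pinv_on I A X \<and> (\<forall>x y. x \<notin> I \<or> y \<notin> I \<longrightarrow> X x y = 0)"
    using 1 2 AX XA out unfolding is_pinv_on_def eqon_def fmid_def by auto
next
  fix Y assume Y: "is_pinv_on I A Y \<and> (\<forall>x y. x \<notin> I \<or> y \<notin> I \<longrightarrow> Y x y = 0)"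
  have AYA: "eqon I (fmmul I (fmmul I A Y) A) A" using Y unfolding is_pinv_on_def eqon_def by auto
  have "eqon I Y (fmmul I fmid (fmmul I Y fmid))"
    by (meson eqon_id_left eqon_id_right eqon_mul eqon_refl eqon_sym eqon_trans fin)
  also have "eqon I \<dots> (fmmul I (fmmul I X A) (fmmul I Y (fmmul I A X)))"
    by (intro eqon_mul eqon_sym[OF XA] eqon_sym[OF AX] eqon_refl)
  also have "fmmul I (fmmul I X A) (fmmul I Y (fmmul I A X)) = fmmul I X (fmmul I (fmmul I (fmmul I A Y) A) X)"
    by (simp add: fmmul_assoc fin)
  also have "eqon I \<dots> (fmmul I X (fmmul I A X))"
    by (intro eqon_mul eqon_refl AYA)
  also have "eqon I \<dots> (fmmul I X fmid)"
    by (intro eqon_mul eqon_refl AX)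
  also have "eqon I \<dots> X" by (rule eqon_id_right[OF fin])
  finally have "eqon I Y X" .
  then show "Y = X" using Y out unfolding eqon_def by (intro ext) metis
qed

lemma orth_norm:
  fixes Q :: "real^'d::finite^'d"
  assumes "orthogonal_matrix Q" shows "norm (Q *v v) = norm v"
proof -
  have "orthogonal_transformation ((*v) Q)"
    using assms orthogonal_transformation_matrix[of "(*v) Q"] by simp
  then show ?thesis by (simp add: orthogonal_transformation_norm)
qed

lemma sum_pair: "sum (f :: ('a::finite \<times> 'b::finite) \<Rightarrow> real) UNIV = (\<Sum>x\<in>UNIV. \<Sum>a\<in>UNIV. f (x, a))"
  by (simp add: sum.cartesian_product)

definition phi :: "real^'d::finite^'d \<Rightarrow> real" where
  "phi A = (\<Sum>b\<in>UNIV. norm (column b A))"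

lemma phi_nonneg: "phi A \<ge> 0" unfolding phi_def by (simp add: sum_nonneg)
lemma phi_zero: "phi 0 = 0" unfolding phi_def by (simp add: column_def zero_vec_def[symmetric])
lemma phi_add: "phi (A + B) \<le> phi A + phi B"
proof -
  have "column b (A + B) = column b A + column b B" for b by (simp add: column_def vec_eq_iff)
  then show ?thesis unfolding phi_def by (simp add: sum.distrib[symmetric] sum_mono norm_triangle_ineq)
qed
lemma phi_scale: "phi (c *\<^sub>R A) = \<bar>c\<bar> * phi A"
proof -
  have "column b (c *\<^sub>R A) = c *\<^sub>R column b A" for b by (simp add: column_def vec_eq_iff)
  then show ?thesis unfolding phi_def by (simp add: sum_distrib_left)
qed
lemma phi_sum: "phi (sum f S) \<le> (\<Sum>x\<in>S. phi (f x))"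
proof (induction S rule: infinite_finite_induct)
  case (infinite S) then show ?case by (simp add: phi_zero)
next
  case empty then show ?case by (simp add: phi_zero)
next
  case (insert x F) then show ?case using phi_add[of "f x" "sum f F"] by simp
qed
lemma column_mult: "column b (Q ** A) = Q *v column b A"
  by (simp add: column_def matrix_matrix_mult_def matrix_vector_mult_def vec_eq_iff)
lemma phi_orth: "orthogonal_matrix (Q::real^'d::finite^'d) \<Longrightarrow> phi (Q ** A) = phi A"
  unfolding phi_def column_mult by (simp add: orth_norm)
lemma norm_le_phi: "norm (A::real^'d::finite^'d) \<le> real CARD('d) * phi A"
proof -
  have "norm A \<le> (\<Sum>a\<in>UNIV. norm (A $ a))" unfolding norm_vec_def by (rule L2_set_le_sum) simp
  also have "\<dots> \<le> (\<Sum>a\<in>(UNIV::'d set). phi A)"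
  proof (rule sum_mono)
    fix a
    have "norm (A $ a) \<le> (\<Sum>b\<in>UNIV. \<bar>A $ a $ b\<bar>)" by (rule norm_le_l1_cart)
    also have "\<dots> \<le> (\<Sum>b\<in>UNIV. norm (column b A))"
      by (rule sum_mono) (metis column_def component_le_norm_cart vec_lambda_beta)
    finally show "norm (A $ a) \<le> phi A" unfolding phi_def .
  qed
  finally show ?thesis by simp
qed

lemma mm_linear: "linear (\<lambda>A. (Q::real^'d::finite^'d) ** A)"
proof (rule linearI)
  show "Q ** (A + B) = Q ** A + Q ** B" for A B by (rule matrix_add_ldistrib)
  show "Q ** (c *\<^sub>R A) = c *\<^sub>R (Q ** A)" for c A
    by (simp add: matrix_matrix_mult_def vec_eq_iff sum_distrib_left algebra_simps)
qed

lemma mm_scale: "(Q::real^'d::finite^'d) ** (c *\<^sub>R A) = c *\<^sub>R (Q ** A)"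
  by (simp add: matrix_matrix_mult_def vec_eq_iff sum_distrib_left algebra_simps)

lemma mm_bl: "bounded_linear (\<lambda>A. c *\<^sub>R ((Q::real^'d::finite^'d) ** A))"
proof -
  have "linear (\<lambda>A. c *\<^sub>R ((Q::real^'d::finite^'d) ** A))"
    by (rule linearI) (simp_all add: matrix_add_ldistrib mm_scale scaleR_add_right)
  then show ?thesis by (rule linear_conv_bounded_linear[THEN iffD1])
qed

lemma mm_sum: "(Q::real^'d::finite^'d) ** sum f S = (\<Sum>x\<in>S. Q ** f x)"
  using linear_sum[OF mm_linear[of Q]] by simp
lemma fin_hit: "finite (hit_paths (x::'v::finite) j T)"
proof -
  have "hit_paths x j T \<subseteq> {xs. set xs \<subseteq> UNIV \<and> length xs = T}" by (auto simp: hit_paths_def)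
  then show ?thesis by (rule finite_subset) (rule finite_lists_length_eq, simp)
qed

lemma hit0: "hit_paths x j 0 = (if x = j then {[]} else {})"
  by (auto simp: hit_paths_def)

lemma hitj: "hit_paths j j (Suc T) = {}"
  by (auto simp: hit_paths_def)

lemma hitS: assumes "x \<noteq> j"
  shows "hit_paths x j (Suc T) = (\<lambda>(y, ys). y # ys) ` (SIGMA y:UNIV. hit_paths y j T)"
proof (rule set_eqI)
  fix xs
  show "xs \<in> hit_paths x j (Suc T) \<longleftrightarrow> xs \<in> (\<lambda>(y, ys). y # ys) ` (SIGMA y:UNIV. hit_paths y j T)"
  proof
    assume h: "xs \<in> hit_paths x j (Suc T)"
    then obtain y ys where xs: "xs = y # ys" by (cases xs) (auto simp: hit_paths_def)
    have "ys \<in> hit_paths y j T"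
      unfolding hit_paths_def
    proof (intro CollectI conjI allI impI)
      show "length ys = T" using h xs by (simp add: hit_paths_def)
      show "(y # ys) ! T = j" using h xs by (simp add: hit_paths_def)
      fix t assume "t < T"
      have "\<forall>t<Suc T. (x # xs) ! t \<noteq> j" using h by (simp add: hit_paths_def)
      moreover have "Suc t < Suc T" using \<open>t < T\<close> by simp
      ultimately have "(x # xs) ! Suc t \<noteq> j" by blast
      then show "(y # ys) ! t \<noteq> j" by (simp add: xs)
    qed
    then show "xs \<in> (\<lambda>(y, ys). y # ys) ` (SIGMA y:UNIV. hit_paths y j T)"
      using xs by auto
  next
    assume "xs \<in> (\<lambda>(y, ys). y # ys) ` (SIGMA y:UNIV. hit_paths y j T)"
    then obtain y ys where xs: "xs = y # ys" and h: "ys \<in> hit_paths y j T" by auto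
    show "xs \<in> hit_paths x j (Suc T)"
      unfolding hit_paths_def
    proof (intro CollectI conjI allI impI)
      show "length xs = Suc T" using h xs by (simp add: hit_paths_def)
      show "(x # xs) ! Suc T = j" using h xs by (simp add: hit_paths_def)
      fix t assume t: "t < Suc T"
      show "(x # xs) ! t \<noteq> j"
      proof (cases t)
        case 0 then show ?thesis using assms by simp
      next
        case (Suc s) then show ?thesis using h t xs by (simp add: hit_paths_def)
      qed
    qed
  qed
qed

lemma minv: assumes "(A::real^'n::finite^'n) ** B = mat 1" shows "matrix_inv A = B"
proof -
  have BA: "B ** A = mat 1" using assms matrix_left_right_inverse by blast
  have "\<exists>A'. A ** A' = mat 1 \<and> A' ** A = mat 1" using assms BA by blast
  then have C: "A ** matrix_inv A = mat 1 \<and> matrix_inv A ** A = mat 1"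
    unfolding matrix_inv_def by (rule someI_ex)
  have "matrix_inv A = matrix_inv A ** (A ** B)" by (simp add: assms)
  also have "\<dots> = (matrix_inv A ** A) ** B" by (simp add: matrix_mul_assoc)
  also have "\<dots> = B" using C by simp
  finally show ?thesis .
qed

lemma split3: assumes "i \<noteq> j"
  shows "sum (g :: 'v::finite \<times> 'd::finite \<Rightarrow> real) UNIV = (\<Sum>c\<in>UNIV. g (i, c)) + (\<Sum>c\<in>UNIV. g (j, c)) + sum g ((- {i, j}) \<times> UNIV)"
proof -
  have U: "(UNIV :: 'v set) = insert i (insert j (- {i, j}))" by auto
  have "sum g UNIV = (\<Sum>x\<in>UNIV. \<Sum>c\<in>UNIV. g (x, c))" by (rule sum_pair)
  also have "\<dots> = (\<Sum>c\<in>UNIV. g (i, c)) + (\<Sum>c\<in>UNIV. g (j, c)) + (\<Sum>x\<in>- {i, j}. \<Sum>c\<in>UNIV. g (x, c))"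
    using assms by (subst U) (simp add: add.assoc)
  also have "(\<Sum>x\<in>- {i, j}. \<Sum>c\<in>UNIV. g (x, c)) = sum g ((- {i, j}) \<times> UNIV)"
    unfolding sum.cartesian_product by simp
  finally show ?thesis .
qed

locale cgraph =
  fixes w :: "'v::finite \<Rightarrow> 'v \<Rightarrow> real" and \<sigma> :: "'v \<Rightarrow> 'v \<Rightarrow> real^'d::finite^'d"
  assumes cg: "connection_graph w \<sigma>"
    and inv: "\<exists>M. fmmul UNIV (conn_lap w \<sigma>) M = fmid \<and> fmmul UNIV M (conn_lap w \<sigma>) = fmid"
begin

abbreviation "L \<equiv> conn_lap w \<sigma>"

definition "Mi = (SOME M. fmmul UNIV L M = fmid \<and> fmmul UNIV M L = fmid)"

lemma Mi: "fmmul UNIV L Mi = fmid" "fmmul UNIV Mi L = fmid"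
  using someI_ex[OF inv] unfolding Mi_def by auto

lemmas cgu = cg[unfolded connection_graph_def]
lemma w_nonneg: "w x y \<ge> 0" using cgu by blast
lemma w_sym: "w x y = w y x" using cgu by blast
lemma w_diag: "w x x = 0" using cgu by blast
lemma conn: "(x, y) \<in> {(a, b). w a b > 0}\<^sup>*" using cgu by blast
lemma orth: "w x y > 0 \<Longrightarrow> orthogonal_matrix (\<sigma> x y)" using cgu by blast
lemma sig_tr: "w x y > 0 \<Longrightarrow> \<sigma> y x = transpose (\<sigma> x y)" using cgu by blast

lemma L_alt: "L (x, a) (y, b) = (if x = y \<and> a = b then deg w x else 0) - w x y * (\<sigma> x y $ a $ b)"
  by (auto simp: conn_lap_def w_diag)

lemma L_sym: "L p q = L q p"
proof -
  obtain x a y b where p: "p = (x, a)" and q: "q = (y, b)" by (cases p, cases q) 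
  show ?thesis
  proof (cases "w x y > 0")
    case True
    then show ?thesis using sig_tr[OF True] by (auto simp: p q L_alt w_sym[of x y] transpose_def)
  next
    case False
    then have "w x y = 0" using w_nonneg[of x y] by auto
    then show ?thesis by (auto simp: p q L_alt w_sym[of x y])
  qed
qed

lemma deg_pos: assumes "x \<noteq> j" shows "deg w x > 0"
proof -
  from conn[of x j] assms obtain y where "w x y > 0"
    by (cases rule: converse_rtranclE) auto
  moreover have "w x y \<le> deg w x" unfolding deg_def
    by (rule member_le_sum) (auto simp: w_nonneg)
  ultimately show ?thesis by simp
qed

definition "Vv v x = (\<chi> a. v (x, a))"

lemma quad_form:
  fixes v :: "'v \<times> 'd \<Rightarrow> real"
  shows "(\<Sum>p\<in>UNIV. \<Sum>q\<in>UNIV. v p * L p q * v q) =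
     (1/2) * (\<Sum>x\<in>UNIV. \<Sum>y\<in>UNIV. w x y * (norm (Vv v x - \<sigma> x y *v Vv v y))^2)"
proof -
  define V where "V = Vv v"
  have A: "(\<Sum>p\<in>UNIV. \<Sum>q\<in>UNIV. v p * L p q * v q) =
     (\<Sum>x\<in>UNIV. deg w x * (V x \<bullet> V x)) - (\<Sum>x\<in>UNIV. \<Sum>y\<in>UNIV. w x y * (V x \<bullet> (\<sigma> x y *v V y)))"
  proof -
    have e1: "(\<Sum>q\<in>UNIV. v (x, a) * L (x, a) q * v q) =
       deg w x * (v (x, a) * v (x, a)) - (\<Sum>y\<in>UNIV. w x y * (v (x, a) * (\<Sum>b\<in>UNIV. \<sigma> x y $ a $ b * v (y, b))))" for x a
    proof -
      have "(\<Sum>q\<in>UNIV. v (x, a) * L (x, a) q * v q) = (\<Sum>y\<in>UNIV. \<Sum>b\<in>UNIV. 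
          (if y = x then (if b = a then deg w x * (v (x, a) * v (x, a)) else 0) else 0) - w x y * (v (x, a) * (\<sigma> x y $ a $ b * v (y, b))))"
        by (subst sum_pair) (auto simp: L_alt algebra_simps intro!: sum.cong)
      also have "\<dots> = deg w x * (v (x, a) * v (x, a)) - (\<Sum>y\<in>UNIV. w x y * (v (x, a) * (\<Sum>b\<in>UNIV. \<sigma> x y $ a $ b * v (y, b))))"
        proof -
          have "(\<Sum>y\<in>UNIV. \<Sum>b\<in>UNIV. (if y = x then (if b = a then deg w x * (v (x, a) * v (x, a)) else 0) else 0)::real)
             = (\<Sum>y\<in>UNIV. if y = x then deg w x * (v (x, a) * v (x, a)) else 0)"
            by (rule sum.cong) auto
          then show ?thesis by (simp add: sum_subtractf sum_distrib_left)
        qed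
      finally show ?thesis .
    qed
    have e2: "V x \<bullet> V x = (\<Sum>a\<in>UNIV. v (x, a) * v (x, a))" for x
      by (simp add: V_def Vv_def inner_vec_def)
    have e3: "V x \<bullet> (\<sigma> x y *v V y) = (\<Sum>a\<in>UNIV. v (x, a) * (\<Sum>b\<in>UNIV. \<sigma> x y $ a $ b * v (y, b)))" for x y
      by (simp add: V_def Vv_def inner_vec_def matrix_vector_mult_def)
    have e0: "(\<Sum>p\<in>UNIV. \<Sum>q\<in>UNIV. v p * L p q * v q) = (\<Sum>x\<in>UNIV. \<Sum>a\<in>UNIV. \<Sum>q\<in>UNIV. v (x, a) * L (x, a) q * v q)"
      by (rule sum_pair)
    show ?thesis
      apply (subst e0)
      apply (simp add: e1 e2 e3 sum_subtractf sum_distrib_left)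
      apply (subst (2) sum.swap)
      apply (simp add: sum_distrib_left)
      done
  qed
  have B: "w x y * (norm (V x - \<sigma> x y *v V y))^2 = w x y * (V x \<bullet> V x + V y \<bullet> V y - 2 * (V x \<bullet> (\<sigma> x y *v V y)))" for x y
  proof (cases "w x y > 0")
    case True
    have "(norm (V x - \<sigma> x y *v V y))^2 = V x \<bullet> V x + (\<sigma> x y *v V y) \<bullet> (\<sigma> x y *v V y) - 2 * (V x \<bullet> (\<sigma> x y *v V y))"
      by (simp add: power2_norm_eq_inner algebra_simps inner_commute)
    also have "(\<sigma> x y *v V y) \<bullet> (\<sigma> x y *v V y) = V y \<bullet> V y"
      using orth_norm[OF orth[OF True], of "V y"] by (metis power2_norm_eq_inner)
    finally show ?thesis by simp
  next
    case False
    then have "w x y = 0" using w_nonneg[of x y] by auto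
    then show ?thesis by simp
  qed
  have C: "(\<Sum>x\<in>UNIV. \<Sum>y\<in>UNIV. w x y * (V y \<bullet> V y)) = (\<Sum>y\<in>UNIV. deg w y * (V y \<bullet> V y))"
    by (subst sum.swap) (simp add: deg_def sum_distrib_right w_sym)
  have D: "(\<Sum>x\<in>UNIV. \<Sum>y\<in>UNIV. w x y * (V x \<bullet> V x)) = (\<Sum>x\<in>UNIV. deg w x * (V x \<bullet> V x))"
    by (simp add: deg_def sum_distrib_right)
  show ?thesis unfolding A V_def[symmetric] B
    by (simp add: algebra_simps sum.distrib sum_subtractf sum_distrib_left C D)
qed


lemma sum_restrict: "(\<And>k. k \<notin> S \<Longrightarrow> f k = 0) \<Longrightarrow> sum f (UNIV::'a::finite set) = sum f S"
  by (rule sum.mono_neutral_right) auto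

lemma Lmul: "(\<Sum>q\<in>UNIV. L (x, a) q * g q) =
   deg w x * g (x, a) - (\<Sum>y\<in>UNIV. w x y * (\<Sum>b\<in>UNIV. \<sigma> x y $ a $ b * g (y, b)))"
proof -
  have "(\<Sum>q\<in>UNIV. L (x, a) q * g q) = (\<Sum>y\<in>UNIV. \<Sum>b\<in>UNIV. 
      (if y = x then (if b = a then deg w x * g (x, a) else 0) else 0) - w x y * (\<sigma> x y $ a $ b * g (y, b)))"
    by (subst sum_pair) (auto simp: L_alt algebra_simps intro!: sum.cong)
  also have "\<dots> = deg w x * g (x, a) - (\<Sum>y\<in>UNIV. w x y * (\<Sum>b\<in>UNIV. \<sigma> x y $ a $ b * g (y, b)))"
  proof -
    have "(\<Sum>y\<in>UNIV. \<Sum>b\<in>UNIV. (if y = x then (if b = a then deg w x * g (x, a) else 0) else 0)::real)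
       = (\<Sum>y\<in>UNIV. if y = x then deg w x * g (x, a) else 0)"
      by (rule sum.cong) auto
    then show ?thesis by (simp add: sum_subtractf sum_distrib_left)
  qed
  finally show ?thesis .
qed

lemma Mi_cancel: "g p = (\<Sum>m\<in>UNIV. Mi p m * (\<Sum>k\<in>UNIV. L m k * g k))"
proof -
  have "(\<Sum>m\<in>UNIV. Mi p m * (\<Sum>k\<in>UNIV. L m k * g k)) = (\<Sum>k\<in>UNIV. fmmul UNIV Mi L p k * g k)"
    unfolding fmmul_def by (simp add: sum_distrib_left sum_distrib_right mult.assoc) (rule sum.swap)
  also have "\<dots> = g p" by (simp add: Mi fmid_def if_distrib[of "\<lambda>t. t * _"] cong: if_cong)
  finally show ?thesis by simp
qed

lemma quad_zero:
  assumes "(\<Sum>p\<in>UNIV. \<Sum>q\<in>UNIV. v p * L p q * v q) = 0"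
  shows "v = (\<lambda>_. 0)"
proof -
  let ?t = "\<lambda>x y. w x y * (norm (Vv v x - \<sigma> x y *v Vv v y))^2"
  have nn: "?t x y \<ge> 0" for x y by (simp add: w_nonneg)
  have "(\<Sum>x\<in>UNIV. \<Sum>y\<in>UNIV. ?t x y) = 0" using assms quad_form[of v] by simp
  then have "\<forall>x\<in>UNIV. (\<Sum>y\<in>UNIV. ?t x y) = 0"
    by (subst (asm) sum_nonneg_eq_0_iff) (auto intro: sum_nonneg nn)
  then have "\<forall>x\<in>UNIV. \<forall>y\<in>UNIV. ?t x y = 0"
    by (subst (asm) sum_nonneg_eq_0_iff) (auto intro: nn)
  then have eq: "w x y * (Vv v x - \<sigma> x y *v Vv v y) $ a = 0" for x y a by (metis (no_types) UNIV_I mult_eq_0_iff zero_power2 norm_eq_zero power_eq_0_iff diff_self zero_index)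
  have Lv: "(\<Sum>q\<in>UNIV. L m q * v q) = 0" for m
  proof -
    obtain x a where m: "m = (x, a)" by (cases m)
    have "(\<Sum>q\<in>UNIV. L m q * v q) = deg w x * v (x, a) - (\<Sum>y\<in>UNIV. w x y * (\<Sum>b\<in>UNIV. \<sigma> x y $ a $ b * v (y, b)))"
      by (simp add: m Lmul)
    also have "\<dots> = (\<Sum>y\<in>UNIV. w x y * (Vv v x - \<sigma> x y *v Vv v y) $ a)"
      by (simp add: Vv_def matrix_vector_mult_def algebra_simps sum_subtractf deg_def sum_distrib_right)
    also have "\<dots> = 0" using eq by (intro sum.neutral) (simp add: algebra_simps)
    finally show ?thesis .
  qed
  show ?thesis
  proof
    fix p show "v p = 0" by (subst Mi_cancel) (simp add: Lv)
  qed
qed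

definition "LS S p q = (if p \<in> S \<and> q \<in> S then L p q else if p \<notin> S \<and> p = q then 1 else 0)"

lemma inv_on:
  "\<exists>X. eqon S (fmmul S L X) fmid \<and> eqon S (fmmul S X L) fmid \<and> (\<forall>x y. x \<notin> S \<or> y \<notin> S \<longrightarrow> X x y = 0)"
proof -
  define Am :: "real^('v \<times> 'd)^('v \<times> 'd)" where "Am = (\<chi> p q. LS S p q)"
  have "\<forall>z. Am *v z = 0 \<longrightarrow> z = 0"
  proof (intro allI impI)
    fix z assume z: "Am *v z = 0"
    have rows: "(\<Sum>q\<in>UNIV. LS S p q * z $ q) = 0" for p
      using z by (cases p) (auto simp: Am_def matrix_vector_mult_def vec_eq_iff)
    have off: "z $ p = 0" if "p \<notin> S" for p
    proof -
      have "(\<Sum>q\<in>UNIV. LS S p q * z $ q) = (\<Sum>q\<in>UNIV. if q = p then z $ p else 0)"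
        using that by (intro sum.cong) (auto simp: LS_def)
      then show ?thesis using rows[of p] by simp
    qed
    have on: "(\<Sum>q\<in>UNIV. L p q * z $ q) = 0" if "p \<in> S" for p
    proof -
      have "(\<Sum>q\<in>UNIV. L p q * z $ q) = (\<Sum>q\<in>UNIV. LS S p q * z $ q)"
        using that off by (intro sum.cong) (auto simp: LS_def)
      then show ?thesis using rows[of p] by simp
    qed
    have "(\<Sum>p\<in>UNIV. \<Sum>q\<in>UNIV. z $ p * L p q * z $ q) = (\<Sum>p\<in>UNIV. z $ p * (\<Sum>q\<in>UNIV. L p q * z $ q))"
      by (simp add: sum_distrib_left mult.assoc)
    also have "\<dots> = 0"
      by (rule sum.neutral) (metis on off mult_eq_0_iff)
    finally have "(\<lambda>p. z $ p) = (\<lambda>_. 0)" by (rule quad_zero)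
    then show "z = 0" by (simp add: vec_eq_iff fun_eq_iff)
  qed
  then obtain B where "B ** Am = mat 1" using matrix_left_invertible_ker by blast
  then have AB: "Am ** B = mat 1" using matrix_left_right_inverse by blast
  have BA: "B ** Am = mat 1" by fact
  define X where "X = (\<lambda>p q. if p \<in> S \<and> q \<in> S then B $ p $ q else 0)"
  have 1: "eqon S (fmmul S L X) fmid"
    unfolding eqon_def
  proof (intro ballI)
    fix p q assume pq: "p \<in> S" "q \<in> S"
    have "fmmul S L X p q = (\<Sum>k\<in>UNIV. LS S p k * B $ k $ q)"
      unfolding fmmul_def using pq by (subst sum_restrict[of S]) (auto simp: LS_def X_def)
    also have "\<dots> = (Am ** B) $ p $ q" by (simp add: matrix_matrix_mult_def Am_def)
    also have "\<dots> = fmid p q" by (simp add: AB mat_def fmid_def)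
    finally show "fmmul S L X p q = fmid p q" .
  qed
  have 2: "eqon S (fmmul S X L) fmid"
    unfolding eqon_def
  proof (intro ballI)
    fix p q assume pq: "p \<in> S" "q \<in> S"
    have "fmmul S X L p q = (\<Sum>k\<in>UNIV. B $ p $ k * LS S k q)"
      unfolding fmmul_def using pq by (subst sum_restrict[of S]) (auto simp: LS_def X_def)
    also have "\<dots> = (B ** Am) $ p $ q" by (simp add: matrix_matrix_mult_def Am_def)
    also have "\<dots> = fmid p q" by (simp add: BA mat_def fmid_def)
    finally show "fmmul S X L p q = fmid p q" .
  qed
  show ?thesis using 1 2 by (intro exI[of _ X]) (auto simp: X_def)
qed


definition "P x y = w x y / deg w x"

lemma deg_nonneg: "deg w x \<ge> 0" unfolding deg_def by (simp add: sum_nonneg w_nonneg)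
lemma P_nonneg: "P x y \<ge> 0" unfolding P_def by (simp add: w_nonneg deg_nonneg)
lemma sumP: "x \<noteq> j \<Longrightarrow> (\<Sum>y\<in>UNIV. P x y) = 1"
  using deg_pos[of x j] unfolding P_def by (simp add: sum_divide_distrib[symmetric] deg_def[symmetric])

lemma P_phi: "P x y * phi (\<sigma> x y ** A) = P x y * phi A"
proof (cases "w x y > 0")
  case True then show ?thesis using phi_orth[OF orth[OF True]] by simp
next
  case False then have "w x y = 0" using w_nonneg[of x y] by auto
  then show ?thesis by (simp add: P_def)
qed

definition "aa j T x = (\<Sum>xs\<in>hit_paths x j T. walk_weight w \<sigma> x xs)"

lemma aa0: "aa j 0 x = (if x = j then mat 1 else 0)"
  by (simp add: aa_def hit0)
lemma aaj: "aa j (Suc T) j = 0"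
  by (simp add: aa_def hitj)
lemma aaS: assumes "x \<noteq> j"
  shows "aa j (Suc T) x = (\<Sum>y\<in>UNIV. P x y *\<^sub>R (\<sigma> x y ** aa j T y))"
proof -
  have inj: "inj_on (\<lambda>(y, ys). y # ys) (SIGMA y:UNIV. hit_paths y j T)"
    by (auto simp: inj_on_def)
  have "aa j (Suc T) x = (\<Sum>(y, ys)\<in>(SIGMA y:UNIV. hit_paths y j T). walk_weight w \<sigma> x (y # ys))"
    unfolding aa_def hitS[OF assms] by (subst sum.reindex[OF inj]) (simp add: case_prod_unfold)
  also have "\<dots> = (\<Sum>y\<in>UNIV. \<Sum>ys\<in>hit_paths y j T. walk_weight w \<sigma> x (y # ys))"
    by (subst sum.Sigma) (auto simp: fin_hit)
  also have "\<dots> = (\<Sum>y\<in>UNIV. P x y *\<^sub>R (\<sigma> x y ** aa j T y))"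
    by (simp add: aa_def P_def mm_sum scaleR_sum_right)
  finally show ?thesis .
qed

fun hh :: "'v \<Rightarrow> nat \<Rightarrow> 'v \<Rightarrow> real" where
  "hh j 0 x = (if x = j then 1 else 0)"
| "hh j (Suc T) x = (if x = j then 0 else (\<Sum>y\<in>UNIV. P x y * hh j T y))"

lemma hh_nonneg: "hh j T x \<ge> 0"
  by (induction T arbitrary: x) (auto intro!: sum_nonneg mult_nonneg_nonneg P_nonneg)

lemma hh_partial: "(\<Sum>T<N. hh j T x) \<le> 1"
proof (induction N arbitrary: x)
  case 0 then show ?case by simp
next
  case (Suc N)
  have "(\<Sum>T<Suc N. hh j T x) = hh j 0 x + (\<Sum>T<N. hh j (Suc T) x)"
    by (rule sum.lessThan_Suc_shift)
  also have "\<dots> \<le> 1"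
  proof (cases "x = j")
    case True then show ?thesis by simp
  next
    case False
    have "(\<Sum>T<N. hh j (Suc T) x) = (\<Sum>y\<in>UNIV. P x y * (\<Sum>T<N. hh j T y))"
      using False by (simp add: sum_distrib_left) (rule sum.swap)
    also have "\<dots> \<le> (\<Sum>y\<in>UNIV. P x y * 1)"
      by (intro sum_mono mult_left_mono Suc.IH P_nonneg)
    also have "\<dots> = 1" using sumP[OF False] by simp
    finally show ?thesis using False by simp
  qed
  finally show ?case .
qed

lemma phi_aa: "phi (aa j T x) \<le> phi (mat 1 :: real^'d^'d) * hh j T x"
proof (induction T arbitrary: x)
  case 0 then show ?case by (simp add: aa0 phi_zero phi_nonneg)
next
  case (Suc T)
  show ?case
  proof (cases "x = j")
    case True then show ?thesis
      by (simp add: aaj phi_zero)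
  next
    case False
    have "phi (aa j (Suc T) x) \<le> (\<Sum>y\<in>UNIV. phi (P x y *\<^sub>R (\<sigma> x y ** aa j T y)))"
      unfolding aaS[OF False] by (rule phi_sum)
    also have "\<dots> = (\<Sum>y\<in>UNIV. P x y * phi (aa j T y))"
      by (simp add: phi_scale P_nonneg P_phi)
    also have "\<dots> \<le> (\<Sum>y\<in>UNIV. P x y * (phi (mat 1 :: real^'d^'d) * hh j T y))"
      by (intro sum_mono mult_left_mono Suc.IH P_nonneg)
    also have "\<dots> = phi (mat 1 :: real^'d^'d) * hh j (Suc T) x"
      using False by (simp add: sum_distrib_left algebra_simps)
    finally show ?thesis .
  qed
qed

lemma summable_aa: "summable (\<lambda>T. aa j T x)"
proof (rule summable_comparison_test)
  show "\<exists>N. \<forall>n\<ge>N. norm (aa j n x) \<le> (real CARD('d) * phi (mat 1 :: real^'d^'d)) * hh j n x"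
  proof (intro exI allI impI)
    fix n
    have "norm (aa j n x) \<le> real CARD('d) * phi (aa j n x)" by (rule norm_le_phi)
    also have "\<dots> \<le> real CARD('d) * (phi (mat 1 :: real^'d^'d) * hh j n x)"
      by (intro mult_left_mono phi_aa) simp
    finally show "norm (aa j n x) \<le> (real CARD('d) * phi (mat 1 :: real^'d^'d)) * hh j n x" by (simp add: mult.assoc)
  qed
  have "summable (\<lambda>n. hh j n x)"
    by (rule summableI_nonneg_bounded[where x=1]) (auto intro: hh_nonneg hh_partial)
  then show "summable (\<lambda>n. (real CARD('d) * phi (mat 1 :: real^'d^'d)) * hh j n x)"
    by (rule summable_mult)
qed

lemma Omega_aa: "Omega0 w \<sigma> x j = (\<Sum>T. aa j T x)"
  by (simp add: Omega0_def aa_def)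

lemma Omega_jj: "Omega0 w \<sigma> j j = mat 1"
proof -
  have "(\<lambda>T. aa j T j) = (\<lambda>T. if T = 0 then mat 1 else 0)"
    by (rule ext) (case_tac T, auto simp: aa0 aaj)
  moreover have "(\<lambda>T. if T = 0 then (mat 1::real^'d^'d) else 0) sums mat 1"
    using sums_single[of 0 "\<lambda>_. mat 1::real^'d^'d"] by simp
  ultimately show ?thesis by (simp add: Omega_aa sums_iff)
qed

lemma Omega_harm: assumes "x \<noteq> j"
  shows "Omega0 w \<sigma> x j = (\<Sum>y\<in>UNIV. P x y *\<^sub>R (\<sigma> x y ** Omega0 w \<sigma> y j))"
proof -
  have "Omega0 w \<sigma> x j = (\<Sum>T. aa j (Suc T) x)"
    using suminf_split_head[OF summable_aa[of j x]] assms by (simp add: Omega_aa aa0)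
  also have "\<dots> = (\<Sum>T. \<Sum>y\<in>UNIV. P x y *\<^sub>R (\<sigma> x y ** aa j T y))"
    using assms by (simp add: aaS)
  also have "\<dots> = (\<Sum>y\<in>UNIV. \<Sum>T. P x y *\<^sub>R (\<sigma> x y ** aa j T y))"
    by (rule suminf_sum) (rule bounded_linear.summable[OF mm_bl summable_aa])
  also have "\<dots> = (\<Sum>y\<in>UNIV. P x y *\<^sub>R (\<sigma> x y ** Omega0 w \<sigma> y j))"
    by (intro sum.cong refl) (simp add: Omega_aa bounded_linear.suminf[OF mm_bl summable_aa])
  finally show ?thesis .
qed


lemma pinv_UNIV: "pinv_on UNIV L = Mi"
  by (rule pinv_on_eq) (simp_all add: Mi eqon_def)

lemma main_ij:
  assumes ij: "i \<noteq> j"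
  shows "Wblk w \<sigma> i j i = matrix_inv (cond_blk w \<sigma> i j i i) \<and> Wblk w \<sigma> i j j = 0"
proof -
  define SS where "SS = (- {j}) \<times> (UNIV :: 'd set)"
  define TT where "TT = (- {i, j}) \<times> (UNIV :: 'd set)"
  obtain XS where XS1: "eqon SS (fmmul SS L XS) fmid" and XS3: "\<forall>x y. x \<notin> SS \<or> y \<notin> SS \<longrightarrow> XS x y = 0"
    using inv_on[of SS] by blast
  obtain XT where XT1: "eqon TT (fmmul TT L XT) fmid" and XT2: "eqon TT (fmmul TT XT L) fmid"
      and XT3: "\<forall>x y. x \<notin> TT \<or> y \<notin> TT \<longrightarrow> XT x y = 0"
    using inv_on[of TT] by blast
  have pT: "pinv_on TT L = XT" by (rule pinv_on_eq) (simp_all add: XT1 XT2 XT3)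
  define u where "u p b = XS p (i, b)" for p b
  have u_j: "u p b = 0" if "fst p = j" for p b
  proof -
    have "p \<notin> SS" using that by (cases p) (auto simp: SS_def)
    then show ?thesis using XS3 unfolding u_def by blast
  qed
  have u_L: "(\<Sum>q\<in>UNIV. L p q * u q b) = (if p = (i, b) then 1 else 0)" if "fst p \<noteq> j" for p b
  proof -
    have pS: "p \<in> SS" "(i, b) \<in> SS" using that ij by (cases p, auto simp: SS_def)+
    have "(\<Sum>q\<in>UNIV. L p q * u q b) = (\<Sum>q\<in>SS. L p q * XS q (i, b))"
      unfolding u_def by (rule sum_restrict) (simp add: XS3)
    also have "\<dots> = fmid p (i, b)" using XS1 pS unfolding eqon_def fmmul_def by blast
    finally show ?thesis by (simp add: fmid_def)
  qed
  define f where "f q a = Omega0 w \<sigma> (fst q) j $ snd q $ a" for q a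
  have f_L: "(\<Sum>q\<in>UNIV. L p q * f q a) = 0" if "fst p \<noteq> j" for p a
  proof -
    obtain x a' where p: "p = (x, a')" by (cases p)
    have x: "x \<noteq> j" using that p by simp
    have "(\<Sum>q\<in>UNIV. L p q * f q a) = deg w x * Omega0 w \<sigma> x j $ a' $ a -
        (\<Sum>y\<in>UNIV. w x y * (\<sigma> x y ** Omega0 w \<sigma> y j) $ a' $ a)"
      by (simp add: p Lmul f_def matrix_matrix_mult_def)
    also have "deg w x * Omega0 w \<sigma> x j $ a' $ a = (\<Sum>y\<in>UNIV. w x y * (\<sigma> x y ** Omega0 w \<sigma> y j) $ a' $ a)"
    proof -
      have "Omega0 w \<sigma> x j $ a' $ a = (\<Sum>y\<in>UNIV. P x y * (\<sigma> x y ** Omega0 w \<sigma> y j) $ a' $ a)"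
        by (subst Omega_harm[OF x]) simp
      then show ?thesis using deg_pos[OF x] by (simp add: sum_distrib_left P_def)
    qed
    finally show ?thesis by simp
  qed
  have f_j: "f (j, c) a = (if c = a then 1 else 0)" for c a
    by (simp add: f_def Omega_jj mat_def)
  have N_j: "(\<Sum>q\<in>UNIV. L (j, a) q * u q b) = - Omega0 w \<sigma> i j $ b $ a" for a b
  proof -
    define Lu where "Lu q = (\<Sum>p\<in>UNIV. L q p * u p b)" for q
    define g where "g q = f q a * Lu q" for q
    have "0 = (\<Sum>p\<in>SS. u p b * (\<Sum>q\<in>UNIV. L p q * f q a))"
      by (rule sym, rule sum.neutral) (auto simp: SS_def f_L)
    also have "\<dots> = (\<Sum>p\<in>UNIV. u p b * (\<Sum>q\<in>UNIV. L p q * f q a))"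
      by (rule sym, rule sum_restrict) (auto simp: SS_def u_j)
    also have "\<dots> = (\<Sum>q\<in>UNIV. \<Sum>p\<in>UNIV. f q a * (L q p * u p b))"
    proof -
      have e: "u p b * (\<Sum>q\<in>UNIV. L p q * f q a) = (\<Sum>q\<in>UNIV. f q a * (L q p * u p b))" for p
        by (simp add: sum_distrib_left, rule sum.cong, simp, metis L_sym mult.commute mult.left_commute)
      have "(\<Sum>p\<in>UNIV. u p b * (\<Sum>q\<in>UNIV. L p q * f q a)) = (\<Sum>p\<in>UNIV. \<Sum>q\<in>UNIV. f q a * (L q p * u p b))"
        using e by (intro sum.cong refl)
      also have "\<dots> = (\<Sum>q\<in>UNIV. \<Sum>p\<in>UNIV. f q a * (L q p * u p b))" by (rule sum.swap)
      finally show ?thesis .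
    qed
    also have "\<dots> = sum g UNIV" by (simp add: g_def Lu_def sum_distrib_left)
    also have "\<dots> = (\<Sum>q\<in>UNIV. if fst q = j then g q else 0) + (\<Sum>q\<in>UNIV. if fst q = j then 0 else g q)"
      by (simp add: sum.distrib[symmetric] if_distrib[symmetric] cong: if_cong) (intro sum.cong, auto)
    also have "(\<Sum>q\<in>UNIV. if fst q = j then 0 else g q) = (\<Sum>q\<in>UNIV. if q = (i, b) then f (i, b) a else 0)"
      by (rule sum.cong) (auto simp: g_def Lu_def u_L ij)
    also have "\<dots> = Omega0 w \<sigma> i j $ b $ a" by (simp add: f_def)
    also have "(\<Sum>q\<in>UNIV. if fst q = j then g q else 0) = (\<Sum>x\<in>UNIV. \<Sum>c\<in>UNIV. if x = j then g (x, c) else 0)"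
      by (subst sum_pair) simp
    also have "\<dots> = (\<Sum>c\<in>UNIV. g (j, c))"
      by (subst sum.swap) (simp add: sum.delta')
    also have "\<dots> = Lu (j, a)"
      by (simp add: g_def f_j if_distrib[of "\<lambda>t. t * _"] sum.delta cong: if_cong)
    finally show ?thesis by (simp add: Lu_def algebra_simps)
  qed
  have LuN: "(\<Sum>q\<in>UNIV. L p q * u q b) = Ncol w \<sigma> i j (fst p) $ snd p $ b" for p b
  proof -
    obtain x a where p: "p = (x, a)" by (cases p)
    show ?thesis
    proof (cases "x = j")
      case True then show ?thesis using ij by (simp add: p N_j Ncol_def transpose_def)
    next
      case False
      then show ?thesis using u_L[of p b] by (auto simp: p Ncol_def mat_def)
    qed
  qed
  have W: "Wblk w \<sigma> i j x = (\<chi> a b. u (x, a) b)" for x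
  proof -
    have "Wblk w \<sigma> i j x $ a $ b = u (x, a) b" for a b
    proof -
      have "Wblk w \<sigma> i j x $ a $ b = (\<Sum>k\<in>UNIV. Mi (x, a) k * (\<Sum>q\<in>UNIV. L k q * u q b))"
        by (simp add: Wblk_def pinv_UNIV LuN)
      also have "\<dots> = u (x, a) b" by (rule Mi_cancel[of "\<lambda>q. u q b", symmetric])
      finally show ?thesis .
    qed
    then show ?thesis by (simp add: vec_eq_iff)
  qed
  have Wj: "Wblk w \<sigma> i j j = 0"
    by (simp add: W vec_eq_iff u_j)
  have ru: "u k b = - (\<Sum>l\<in>TT. XT k l * (\<Sum>c\<in>UNIV. L l (i, c) * u (i, c) b))" if k: "k \<in> TT" for k b
  proof -
    have row: "(\<Sum>m\<in>TT. L l m * u m b) = - (\<Sum>c\<in>UNIV. L l (i, c) * u (i, c) b)" if l: "l \<in> TT" for l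
    proof -
      have "fst l \<noteq> j" "l \<noteq> (i, b)" using l by (auto simp: TT_def)
      then have "0 = (\<Sum>q\<in>UNIV. L l q * u q b)" using u_L[of l b] by simp
      also have "\<dots> = (\<Sum>c\<in>UNIV. L l (i, c) * u (i, c) b) + (\<Sum>m\<in>TT. L l m * u m b)"
        unfolding split3[OF ij] TT_def by (simp add: u_j)
      finally show ?thesis by simp
    qed
    have "u k b = (\<Sum>m\<in>TT. fmid k m * u m b)"
      using k by (simp add: fmid_def if_distrib[of "\<lambda>t. t * _"] sum.delta cong: if_cong)
    also have "\<dots> = (\<Sum>m\<in>TT. fmmul TT XT L k m * u m b)"
      using XT2 k unfolding eqon_def by (intro sum.cong) auto
    also have "\<dots> = (\<Sum>l\<in>TT. XT k l * (\<Sum>m\<in>TT. L l m * u m b))"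
      unfolding fmmul_def by (simp add: sum_distrib_left sum_distrib_right mult.assoc) (rule sum.swap)
    also have "\<dots> = (\<Sum>l\<in>TT. XT k l * (- (\<Sum>c\<in>UNIV. L l (i, c) * u (i, c) b)))"
      by (intro sum.cong refl) (simp add: row)
    finally show ?thesis by (simp add: sum_negf)
  qed
  define C where "C = cond_blk w \<sigma> i j i i"
  define U where "U = (\<chi> a b. u (i, a) b)"
  have Cab: "C $ a $ c = L (i, a) (i, c) - (\<Sum>k\<in>TT. \<Sum>l\<in>TT. L (i, a) k * XT k l * L l (i, c))" for a c
    by (simp add: C_def cond_blk_def schur_on_def TT_def[symmetric] pT)
  have "(C ** U) $ a $ b = mat 1 $ a $ b" for a b
  proof -
    have "(C ** U) $ a $ b = (\<Sum>c\<in>UNIV. L (i, a) (i, c) * u (i, c) b) -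
        (\<Sum>c\<in>UNIV. \<Sum>k\<in>TT. \<Sum>l\<in>TT. L (i, a) k * XT k l * L l (i, c) * u (i, c) b)"
      by (simp add: matrix_matrix_mult_def U_def Cab left_diff_distrib sum_subtractf sum_distrib_right)
    also have "(\<Sum>c\<in>UNIV. \<Sum>k\<in>TT. \<Sum>l\<in>TT. L (i, a) k * XT k l * L l (i, c) * u (i, c) b)
        = (\<Sum>k\<in>TT. L (i, a) k * (\<Sum>l\<in>TT. XT k l * (\<Sum>c\<in>UNIV. L l (i, c) * u (i, c) b)))"
    proof -
      have "(\<Sum>c\<in>UNIV. \<Sum>k\<in>TT. \<Sum>l\<in>TT. L (i, a) k * XT k l * L l (i, c) * u (i, c) b)
          = (\<Sum>k\<in>TT. \<Sum>c\<in>UNIV. \<Sum>l\<in>TT. L (i, a) k * XT k l * L l (i, c) * u (i, c) b)"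
        by (rule sum.swap)
      also have "\<dots> = (\<Sum>k\<in>TT. \<Sum>l\<in>TT. \<Sum>c\<in>UNIV. L (i, a) k * XT k l * L l (i, c) * u (i, c) b)"
        by (intro sum.cong refl) (rule sum.swap)
      also have "\<dots> = (\<Sum>k\<in>TT. L (i, a) k * (\<Sum>l\<in>TT. XT k l * (\<Sum>c\<in>UNIV. L l (i, c) * u (i, c) b)))"
        by (simp add: sum_distrib_left mult.assoc)
      finally show ?thesis .
    qed
    also have "\<dots> = - (\<Sum>k\<in>TT. L (i, a) k * u k b)"
      by (simp add: ru sum_negf)
    also have "(\<Sum>c\<in>UNIV. L (i, a) (i, c) * u (i, c) b) - - (\<Sum>k\<in>TT. L (i, a) k * u k b)
        = (\<Sum>q\<in>UNIV. L (i, a) q * u q b)"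
      unfolding split3[OF ij] TT_def by (simp add: u_j)
    also have "\<dots> = mat 1 $ a $ b" using u_L[of "(i, a)" b] ij by (simp add: mat_def)
    finally show ?thesis .
  qed
  then have "C ** U = mat 1" by (simp add: vec_eq_iff)
  then have "matrix_inv C = U" by (rule minv)
  then show ?thesis using W[of i] Wj by (simp add: C_def U_def)
qed

end


theorem proposition6p6:
  fixes w :: "'v::finite \<Rightarrow> 'v \<Rightarrow> real"
    and \<sigma> :: "'v \<Rightarrow> 'v \<Rightarrow> real^'d::finite^'d"
    and i j :: 'v
  assumes "connection_graph w \<sigma>"
    and "\<exists>M. fmmul UNIV (conn_lap w \<sigma>) M = fmid \<and> fmmul UNIV M (conn_lap w \<sigma>) = fmid"
    and "i \<noteq> j"
  shows "Rmat w \<sigma> i j =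
    ((matrix_inv (cond_blk w \<sigma> i j i i), 0), (0, matrix_inv (cond_blk w \<sigma> i j j j)))"
proof -
  interpret cgraph w \<sigma> using assms(1,2) by unfold_locales
  have 1: "Wblk w \<sigma> i j i = matrix_inv (cond_blk w \<sigma> i j i i) \<and> Wblk w \<sigma> i j j = 0"
    by (rule main_ij) (rule assms(3))
  have 2: "Wblk w \<sigma> j i j = matrix_inv (cond_blk w \<sigma> j i j j) \<and> Wblk w \<sigma> j i i = 0"
    by (rule main_ij) (use assms(3) in auto)
  have 3: "cond_blk w \<sigma> j i j j = cond_blk w \<sigma> i j j j"
    by (simp add: cond_blk_def insert_commute)
  show ?thesis using 1 2 3 by (simp add: Rmat_def)
qed

end
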